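(* Let $F\colon(-\varepsilon,\varepsilon)\times M^n\to\mathbb{R}^{n+1}$ be a conformal infinitesimal variation of an isometric immersion $f\colon M^n\to\mathbb{R}^{n+1}$ with conformal factor $\rho$. Let $N_t$ be a unit normal vector field to $f_t=F(t,\cdot)$ (depending smoothly on $t$), $A_t$ the corresponding shape operator, $A=A_0$ and $A'=\frac{\partial}{\partial t}|_{t=0}A_t$. Then the tensor $\mathcal{B}$ associated with $F$ satisfies $\mathcal{B}=A'+\rho A$.
   Context: Conformal infinitesimal variation: $f_t$ immersions, $f_0=f$, positive $\gamma$ with $\gamma(0,\cdot)=1$ and $\frac{\partial}{\partial t}|_{t=0}(\gamma\langle f_{t*}X,f_{t*}Y\rangle)=0$; its variational field $\mathcal{T}=F_*\partial_t|_{t=0}$ satisfies $\langle\tilde\nabla_X\mathcal{T},f_*Y\rangle+\langle f_*X,\tilde\nabla_Y\mathcal{T}\rangle=2\rho\langle X,Y\rangle$ with $\rho=-\frac12\partial_t\gamma(0,\cdot)$. With $\alpha$ the second fundamental form of $f$ and $N=N_0$, $\beta(X,Y)=(\tilde\nabla_X\tilde\nabla_Y\mathcal{T}-\tilde\nabla_{\nabla_XY}\mathcal{T})_{N_fM}-\rho\alpha(X,Y)$, and $\mathcal{B}\in\Gamma(\mathrm{End}(TM))$ is defined by $\langle\mathcal{B}X,Y\rangle=\langle\beta(X,Y),N\rangle$. *)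

theory Defs
  imports "HOL-Analysis.Analysis"
begin

text \<open>Local (chart) model: the manifold M^n is represented by an open set U of real^'n
  (coordinates), the hypersurface lives in real^'m with CARD('m) = CARD('n) + 1.\<close>

fun Ck_on :: "nat \<Rightarrow> 'a::euclidean_space set \<Rightarrow> ('a \<Rightarrow> 'b::real_normed_vector) \<Rightarrow> bool" where
  "Ck_on 0 S f = continuous_on S f"
| "Ck_on (Suc k) S f = (f differentiable_on S \<and>
      (\<forall>b\<in>Basis. Ck_on k S (\<lambda>x. frechet_derivative f (at x) b)))"

definition smooth_on :: "'a::euclidean_space set \<Rightarrow> ('a \<Rightarrow> 'b::real_normed_vector) \<Rightarrow> bool" where
  "smooth_on S f = (\<forall>k. Ck_on k S f)"

definition pd :: "'n::finite \<Rightarrow> (real^'n \<Rightarrow> 'b::real_normed_vector) \<Rightarrow> real^'n \<Rightarrow> 'b" where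
  "pd i g x = frechet_derivative g (at x) (axis i 1)"

definition dt0 :: "(real \<Rightarrow> 'b::real_normed_vector) \<Rightarrow> 'b" where
  "dt0 h = vector_derivative h (at 0)"

definition immersion_on :: "(real^'n) set \<Rightarrow> (real^'n::finite \<Rightarrow> real^'m::finite) \<Rightarrow> bool" where
  "immersion_on U f = (open U \<and> smooth_on U f \<and>
      (\<forall>x\<in>U. inj (frechet_derivative f (at x))))"

definition metric :: "(real^'n::finite \<Rightarrow> real^'m::finite) \<Rightarrow> real^'n \<Rightarrow> real^'n^'n" where
  "metric f x = (\<chi> i j. pd i f x \<bullet> pd j f x)"

definition metric_inv :: "(real^'n::finite \<Rightarrow> real^'m::finite) \<Rightarrow> real^'n \<Rightarrow> real^'n^'n" where
  "metric_inv f x = matrix_inv (metric f x)"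

definition unit_normal_on :: "(real^'n) set \<Rightarrow> (real^'n::finite \<Rightarrow> real^'m::finite) \<Rightarrow> (real^'n \<Rightarrow> real^'m) \<Rightarrow> bool" where
  "unit_normal_on U f N = (\<forall>x\<in>U. norm (N x) = 1 \<and> (\<forall>i. N x \<bullet> pd i f x = 0))"

text \<open>Shape operator A (w.r.t. unit normal N) as a matrix in the coordinate frame:
  A d_j = sum_k A$k$j d_k, with <A d_j, d_l> = - <d_j N, f_* d_l>, i.e. A X = -(d N X)^T.\<close>
definition shape_op :: "(real^'n::finite \<Rightarrow> real^'m::finite) \<Rightarrow> (real^'n \<Rightarrow> real^'m) \<Rightarrow> real^'n \<Rightarrow> real^'n^'n" where
  "shape_op f N x = (\<chi> k j. \<Sum>l\<in>UNIV. metric_inv f x $ k $ l * (- (pd j N x \<bullet> pd l f x)))"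

text \<open>Christoffel symbols of the induced metric: nabla_{d_i} d_j = sum_k Gamma k i j d_k.\<close>
definition christoffel :: "(real^'n::finite \<Rightarrow> real^'m::finite) \<Rightarrow> real^'n \<Rightarrow> 'n \<Rightarrow> 'n \<Rightarrow> 'n \<Rightarrow> real" where
  "christoffel f x k i j = (\<Sum>l\<in>UNIV. metric_inv f x $ k $ l * (pd i (pd j f) x \<bullet> pd l f x))"

definition sff :: "(real^'n::finite \<Rightarrow> real^'m::finite) \<Rightarrow> (real^'n \<Rightarrow> real^'m) \<Rightarrow> real^'n \<Rightarrow> 'n \<Rightarrow> 'n \<Rightarrow> real^'m" where
  "sff f N x i j = (pd i (pd j f) x \<bullet> N x) *\<^sub>R N x"

definition beta_tensor :: "(real^'n::finite \<Rightarrow> real^'m::finite) \<Rightarrow> (real^'n \<Rightarrow> real^'m) \<Rightarrow> (real^'n \<Rightarrow> real^'m)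
    \<Rightarrow> (real^'n \<Rightarrow> real) \<Rightarrow> real^'n \<Rightarrow> 'n \<Rightarrow> 'n \<Rightarrow> real^'m" where
  "beta_tensor f N T \<rho> x i j =
     (((pd i (pd j T) x - (\<Sum>k\<in>UNIV. christoffel f x k i j *\<^sub>R pd k T x)) \<bullet> N x) *\<^sub>R N x)
     - \<rho> x *\<^sub>R sff f N x i j"

text \<open>The endomorphism B with <B X, Y> = <beta(X,Y), N>, as a matrix in the coordinate frame:
  B d_i = sum_k B$k$i d_k.\<close>
definition B_tensor :: "(real^'n::finite \<Rightarrow> real^'m::finite) \<Rightarrow> (real^'n \<Rightarrow> real^'m) \<Rightarrow> (real^'n \<Rightarrow> real^'m)
    \<Rightarrow> (real^'n \<Rightarrow> real) \<Rightarrow> real^'n \<Rightarrow> real^'n^'n" where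
  "B_tensor f N T \<rho> x = (\<chi> k i. \<Sum>j\<in>UNIV. metric_inv f x $ k $ j * (beta_tensor f N T \<rho> x i j \<bullet> N x))"

definition conformal_inf_variation ::
  "real \<Rightarrow> (real^'n) set \<Rightarrow> (real^'n::finite \<Rightarrow> real^'m::finite) \<Rightarrow> (real \<Rightarrow> real^'n \<Rightarrow> real^'m)
     \<Rightarrow> (real \<Rightarrow> real^'n \<Rightarrow> real) \<Rightarrow> bool" where
  "conformal_inf_variation \<epsilon> U f F \<gamma> =
     (0 < \<epsilon> \<and> open U \<and>
      smooth_on ({-\<epsilon><..<\<epsilon>} \<times> U) (\<lambda>(t,x). F t x) \<and>
      smooth_on ({-\<epsilon><..<\<epsilon>} \<times> U) (\<lambda>(t,x). \<gamma> t x) \<and>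
      (\<forall>t\<in>{-\<epsilon><..<\<epsilon>}. immersion_on U (F t)) \<and>
      (\<forall>x\<in>U. F 0 x = f x) \<and>
      (\<forall>t\<in>{-\<epsilon><..<\<epsilon>}. \<forall>x\<in>U. 0 < \<gamma> t x) \<and>
      (\<forall>x\<in>U. \<gamma> 0 x = 1) \<and>
      (\<forall>x\<in>U. \<forall>i j. dt0 (\<lambda>t. \<gamma> t x * (pd i (F t) x \<bullet> pd j (F t) x)) = 0))"

end

theory Submission
  imports Defs
begin


lemma fd_local:
  assumes "open X" "x \<in> X" "\<And>y. y \<in> X \<Longrightarrow> f y = g y"
  shows "frechet_derivative f (at x) = frechet_derivative g (at x)"
proof -
  have "(\<lambda>f'. (f has_derivative f') (at x)) = (\<lambda>f'. (g has_derivative f') (at x))"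
  proof (rule ext, rule iffI)
    fix f' assume "(f has_derivative f') (at x)"
    then show "(g has_derivative f') (at x)"
      by (rule has_derivative_transform_within_open[OF _ assms(1,2)]) (simp add: assms(3))
  next
    fix f' assume "(g has_derivative f') (at x)"
    then show "(f has_derivative f') (at x)"
      by (rule has_derivative_transform_within_open[OF _ assms(1,2)]) (simp add: assms(3))
  qed
  then show ?thesis unfolding frechet_derivative_def by simp
qed

lemma pd_local:
  assumes "open X" "x \<in> X" "\<And>y. y \<in> X \<Longrightarrow> f y = g y"
  shows "pd i f x = pd i g x"
  unfolding pd_def using fd_local[OF assms] by simp

lemma smooth_diff: "smooth_on S f \<Longrightarrow> f differentiable_on S"
  unfolding smooth_on_def by (metis Ck_on.simps(2))

lemma smooth_cont: "smooth_on S f \<Longrightarrow> continuous_on S f"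
  unfolding smooth_on_def by (metis Ck_on.simps(1))

lemma smooth_D: "smooth_on S f \<Longrightarrow> b \<in> Basis \<Longrightarrow> smooth_on S (\<lambda>z. frechet_derivative f (at z) b)"
  unfolding smooth_on_def by (metis Ck_on.simps(2))

lemma smooth_at: "smooth_on S f \<Longrightarrow> open S \<Longrightarrow> z \<in> S \<Longrightarrow> f differentiable (at z)"
  using smooth_diff differentiable_on_eq_differentiable_at by blast

lemma fd_works: "f differentiable (at z) \<Longrightarrow> (f has_derivative frechet_derivative f (at z)) (at z)"
  using frechet_derivative_works by blast

lemma K1:
  fixes g :: "real \<times> 'a::real_normed_vector \<Rightarrow> 'b::real_normed_vector"
  assumes "g differentiable (at (t,y))"
  shows "((\<lambda>w. g (t,w)) has_derivative (\<lambda>v. frechet_derivative g (at (t,y)) (0,v))) (at y)"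
proof -
  have "((\<lambda>w. (t,w)) has_derivative (\<lambda>v. (0,v))) (at y)"
    by (intro has_derivative_Pair has_derivative_const has_derivative_ident)
  from has_derivative_compose[OF this fd_works[OF assms]] show ?thesis by simp
qed

lemma K1pd:
  fixes g :: "real \<times> (real^'n::finite) \<Rightarrow> 'b::real_normed_vector"
  assumes "g differentiable (at (t,y))"
  shows "pd i (\<lambda>w. g (t,w)) y = frechet_derivative g (at (t,y)) (0, axis i 1)"
  unfolding pd_def using frechet_derivative_at[OF K1[OF assms]] by metis

lemma K2:
  fixes g :: "real \<times> 'a::real_normed_vector \<Rightarrow> 'b::real_normed_vector"
  assumes "g differentiable (at (t,y))"
  shows "((\<lambda>s. g (s,y)) has_vector_derivative frechet_derivative g (at (t,y)) (1,0)) (at t)"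
proof -
  have "((\<lambda>s. (s,y)) has_derivative (\<lambda>v. (v,0))) (at t)"
    by (intro has_derivative_Pair has_derivative_const has_derivative_ident)
  from has_derivative_compose[OF this fd_works[OF assms]]
  have "((\<lambda>s. g (s,y)) has_derivative (\<lambda>v. frechet_derivative g (at (t,y)) (v,0))) (at t)" by simp
  moreover have "linear (frechet_derivative g (at (t,y)))"
    using linear_frechet_derivative[OF assms] .
  then have "(\<lambda>v. frechet_derivative g (at (t,y)) (v,0)) = (\<lambda>v. v *\<^sub>R frechet_derivative g (at (t,y)) (1,0))"
    by (auto simp: linear_scale[symmetric])
  ultimately show ?thesis unfolding has_vector_derivative_def by simp
qed

lemma K3:
  fixes a c :: "'a::real_normed_vector \<Rightarrow> 'b::real_inner"
  assumes "open S" "z \<in> S" "a differentiable (at z)" "c differentiable (at z)"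
    "\<And>p. p \<in> S \<Longrightarrow> a p \<bullet> c p = k"
  shows "frechet_derivative a (at z) b \<bullet> c z + a z \<bullet> frechet_derivative c (at z) b = 0"
proof -
  have 1: "((\<lambda>p. a p \<bullet> c p) has_derivative
     (\<lambda>h. a z \<bullet> frechet_derivative c (at z) h + frechet_derivative a (at z) h \<bullet> c z)) (at z)"
    by (intro has_derivative_inner fd_works assms)
  have "((\<lambda>p. k) has_derivative (\<lambda>h. 0)) (at z)" by simp
  then have 2: "((\<lambda>p. a p \<bullet> c p) has_derivative (\<lambda>h. 0)) (at z)"
    by (rule has_derivative_transform_within_open[OF _ assms(1,2)]) (simp add: assms(5))
  from fun_cong[OF has_derivative_unique[OF 1 2], of b] have "a z \<bullet> frechet_derivative c (at z) b + frechet_derivative a (at z) b \<bullet> c z = 0"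
    by simp
  then show ?thesis by (simp add: algebra_simps)
qed

lemma vec_hvd:
  fixes f :: "real \<Rightarrow> 'a::euclidean_space ^ 'n::finite"
  assumes "\<And>i. ((\<lambda>t. f t $ i) has_vector_derivative d $ i) (at t0)"
  shows "(f has_vector_derivative d) (at t0)"
  unfolding has_vector_derivative_def
proof (subst has_derivative_componentwise_within, intro ballI)
  fix b :: "'a^'n" assume "b \<in> Basis"
  then obtain i u where b: "b = axis i u" "u \<in> Basis" unfolding Basis_vec_def by auto
  have "((\<lambda>t. f t $ i \<bullet> u) has_derivative (\<lambda>h. (h *\<^sub>R d $ i) \<bullet> u)) (at t0)"
    using assms[of i] unfolding has_vector_derivative_def by (intro has_derivative_inner_left)
  then show "((\<lambda>x. f x \<bullet> b) has_derivative (\<lambda>x. x *\<^sub>R d \<bullet> b)) (at t0)"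
    by (simp add: b inner_axis)
qed



lemma dshift:
  fixes g gu :: "'a::real_normed_vector \<Rightarrow> real"
  assumes du: "\<And>p. p \<in> S \<Longrightarrow> ((\<lambda>s. g (p + s *\<^sub>R u)) has_real_derivative gu p) (at 0)"
    and q: "q + s0 *\<^sub>R u \<in> S"
  shows "((\<lambda>s. g (q + s *\<^sub>R u)) has_real_derivative gu (q + s0 *\<^sub>R u)) (at s0)"
proof -
  have "((\<lambda>s. g ((q + s0 *\<^sub>R u) + s *\<^sub>R u)) has_real_derivative gu (q + s0 *\<^sub>R u)) (at 0)"
    using du[OF q] .
  moreover have "(\<lambda>s. g ((q + s0 *\<^sub>R u) + s *\<^sub>R u)) = (\<lambda>s. (\<lambda>s. g (q + s *\<^sub>R u)) (s + s0))"
    by (auto simp: algebra_simps)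
  ultimately have "((\<lambda>s. (\<lambda>s. g (q + s *\<^sub>R u)) (s + s0)) has_real_derivative gu (q + s0 *\<^sub>R u)) (at 0)"
    by simp
  then show ?thesis using DERIV_shift[of "\<lambda>s. g (q + s *\<^sub>R u)" "gu (q + s0 *\<^sub>R u)" 0 s0] by simp
qed

lemma second_diff:
  fixes g gu guv :: "'a::real_normed_vector \<Rightarrow> real"
  assumes du: "\<And>p. p \<in> S \<Longrightarrow> ((\<lambda>s. g (p + s *\<^sub>R u)) has_real_derivative gu p) (at 0)"
    and duv: "\<And>p. p \<in> S \<Longrightarrow> ((\<lambda>s. gu (p + s *\<^sub>R v)) has_real_derivative guv p) (at 0)"
    and h: "0 < h"
    and inS: "\<And>s r. 0 \<le> s \<Longrightarrow> s \<le> h \<Longrightarrow> 0 \<le> r \<Longrightarrow> r \<le> h \<Longrightarrow> z + s *\<^sub>R u + r *\<^sub>R v \<in> S"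
  shows "\<exists>s r. 0 < s \<and> s < h \<and> 0 < r \<and> r < h \<and>
     g ((z + h *\<^sub>R v) + h *\<^sub>R u) - g (z + h *\<^sub>R u) - g (z + h *\<^sub>R v) + g z
       = h * h * guv (z + s *\<^sub>R u + r *\<^sub>R v)"
proof -
  define \<phi> where "\<phi> = (\<lambda>s. g ((z + h *\<^sub>R v) + s *\<^sub>R u) - g (z + s *\<^sub>R u))"
  have "\<exists>s1>0. s1 < h \<and> \<phi> h - \<phi> 0 = (h - 0) * (gu ((z + h *\<^sub>R v) + s1 *\<^sub>R u) - gu (z + s1 *\<^sub>R u))"
    unfolding \<phi>_def
  proof (rule MVT2[OF h], rule DERIV_diff)
    fix x assume x: "0 \<le> x" "x \<le> h"
    have "(z + h *\<^sub>R v) + x *\<^sub>R u = z + x *\<^sub>R u + h *\<^sub>R v" by (simp add: algebra_simps)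
    have "z + x *\<^sub>R u + h *\<^sub>R v \<in> S" using inS[OF x, of h] h by simp
    then have "(z + h *\<^sub>R v) + x *\<^sub>R u \<in> S" by (simp add: add_ac)
    from dshift[OF du this] 
    show "((\<lambda>s. g ((z + h *\<^sub>R v) + s *\<^sub>R u)) has_real_derivative gu ((z + h *\<^sub>R v) + x *\<^sub>R u)) (at x)"
      by simp
    have "z + x *\<^sub>R u \<in> S" using inS[OF x, of 0] h by simp
    from dshift[OF du this] show "((\<lambda>s. g (z + s *\<^sub>R u)) has_real_derivative gu (z + x *\<^sub>R u)) (at x)"
      by simp
  qed
  then obtain s1 where s1: "0 < s1" "s1 < h"
    "\<phi> h - \<phi> 0 = h * (gu ((z + h *\<^sub>R v) + s1 *\<^sub>R u) - gu (z + s1 *\<^sub>R u))" by auto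
  have "\<exists>r1>0. r1 < h \<and> gu ((z + s1 *\<^sub>R u) + h *\<^sub>R v) - gu ((z + s1 *\<^sub>R u) + 0 *\<^sub>R v)
          = (h - 0) * guv ((z + s1 *\<^sub>R u) + r1 *\<^sub>R v)"
  proof (rule MVT2[OF h])
    fix x assume x: "0 \<le> x" "x \<le> h"
    have "(z + s1 *\<^sub>R u) + x *\<^sub>R v \<in> S" using inS[of s1 x] s1 x by simp
    from dshift[OF duv this] show "((\<lambda>r. gu ((z + s1 *\<^sub>R u) + r *\<^sub>R v)) has_real_derivative guv ((z + s1 *\<^sub>R u) + x *\<^sub>R v)) (at x)"
      by simp
  qed
  then obtain r1 where r1: "0 < r1" "r1 < h"
    "gu ((z + s1 *\<^sub>R u) + h *\<^sub>R v) - gu ((z + s1 *\<^sub>R u) + 0 *\<^sub>R v) = h * guv ((z + s1 *\<^sub>R u) + r1 *\<^sub>R v)"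
    by auto
  have e: "(z + h *\<^sub>R v) + s1 *\<^sub>R u = (z + s1 *\<^sub>R u) + h *\<^sub>R v" by (simp add: algebra_simps)
  have "g ((z + h *\<^sub>R v) + h *\<^sub>R u) - g (z + h *\<^sub>R u) - g (z + h *\<^sub>R v) + g z = \<phi> h - \<phi> 0"
    unfolding \<phi>_def by simp
  also have "\<dots> = h * (h * guv ((z + s1 *\<^sub>R u) + r1 *\<^sub>R v))"
    using s1(3) r1(3) e by simp
  finally show ?thesis using s1 r1 by (intro exI[of _ s1] exI[of _ r1]) simp
qed

lemma clairaut_real:
  fixes g gu gv guv gvu :: "'a::real_normed_vector \<Rightarrow> real"
  assumes S: "open S" "z \<in> S"
    and du: "\<And>p. p \<in> S \<Longrightarrow> ((\<lambda>s. g (p + s *\<^sub>R u)) has_real_derivative gu p) (at 0)"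
    and dv: "\<And>p. p \<in> S \<Longrightarrow> ((\<lambda>s. g (p + s *\<^sub>R v)) has_real_derivative gv p) (at 0)"
    and duv: "\<And>p. p \<in> S \<Longrightarrow> ((\<lambda>s. gu (p + s *\<^sub>R v)) has_real_derivative guv p) (at 0)"
    and dvu: "\<And>p. p \<in> S \<Longrightarrow> ((\<lambda>s. gv (p + s *\<^sub>R u)) has_real_derivative gvu p) (at 0)"
    and c1: "isCont guv z" and c2: "isCont gvu z"
  shows "guv z = gvu z"
proof (rule ccontr)
  assume ne: "guv z \<noteq> gvu z"
  define d where "d = \<bar>guv z - gvu z\<bar>"
  have d: "d > 0" using ne by (simp add: d_def)
  obtain d1 where d1: "d1 > 0" "\<And>y. dist y z < d1 \<Longrightarrow> dist (guv y) (guv z) < d/2"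
    using c1[unfolded continuous_at_eps_delta] d by (meson half_gt_zero)
  obtain d2 where d2: "d2 > 0" "\<And>y. dist y z < d2 \<Longrightarrow> dist (gvu y) (gvu z) < d/2"
    using c2[unfolded continuous_at_eps_delta] d by (meson half_gt_zero)
  obtain r where r: "r > 0" "ball z r \<subseteq> S" using S open_contains_ball by blast
  define \<delta> where "\<delta> = min r (min d1 d2)"
  have \<delta>: "\<delta> > 0" using r d1 d2 by (simp add: \<delta>_def)
  define h where "h = \<delta> / (2 * (norm u + norm v + 1))"
  have pos: "2 * (norm u + norm v + 1) > 0" by (smt (verit) norm_ge_zero)
  have h: "h > 0" using \<delta> pos unfolding h_def by (rule divide_pos_pos)
  have hb: "h * (norm u + norm v) < \<delta>"
  proof -
    have "h * (norm u + norm v) \<le> h * (norm u + norm v + 1)" using h by simp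
    also have "\<dots> = \<delta> / 2" unfolding h_def using pos by (simp add: field_simps)
    finally show ?thesis using \<delta> by simp
  qed
  have close: "dist (z + s *\<^sub>R a + t *\<^sub>R b) z < \<delta>"
    if "0 \<le> s" "s \<le> h" "0 \<le> t" "t \<le> h" "(a = u \<and> b = v) \<or> (a = v \<and> b = u)" for s t a b
  proof -
    have "dist (z + s *\<^sub>R a + t *\<^sub>R b) z = norm (s *\<^sub>R a + t *\<^sub>R b)" by (simp add: dist_norm)
    also have "\<dots> \<le> s * norm a + t * norm b"
      using norm_triangle_ineq[of "s *\<^sub>R a" "t *\<^sub>R b"] that by simp
    also have "\<dots> \<le> h * norm a + h * norm b"
      using that by (intro add_mono mult_right_mono) auto
    also have "\<dots> = h * (norm u + norm v)" using that(5) by (auto simp: algebra_simps)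
    finally show ?thesis using hb by simp
  qed
  have inS: "z + s *\<^sub>R a + t *\<^sub>R b \<in> S"
    if "0 \<le> s" "s \<le> h" "0 \<le> t" "t \<le> h" "(a = u \<and> b = v) \<or> (a = v \<and> b = u)" for s t a b
  proof -
    have "dist z (z + s *\<^sub>R a + t *\<^sub>R b) < r" using close[OF that] by (simp add: \<delta>_def dist_commute)
    then show ?thesis using r(2) by auto
  qed
  obtain s1 r1 where A: "0 < s1" "s1 < h" "0 < r1" "r1 < h"
    "g ((z + h *\<^sub>R v) + h *\<^sub>R u) - g (z + h *\<^sub>R u) - g (z + h *\<^sub>R v) + g z
       = h * h * guv (z + s1 *\<^sub>R u + r1 *\<^sub>R v)"
  proof -
    have "\<And>s r. 0 \<le> s \<Longrightarrow> s \<le> h \<Longrightarrow> 0 \<le> r \<Longrightarrow> r \<le> h \<Longrightarrow> z + s *\<^sub>R u + r *\<^sub>R v \<in> S"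
      using inS by blast
    from second_diff[OF du duv h this] show ?thesis using that by blast
  qed
  obtain s2 r2 where B: "0 < s2" "s2 < h" "0 < r2" "r2 < h"
    "g ((z + h *\<^sub>R u) + h *\<^sub>R v) - g (z + h *\<^sub>R v) - g (z + h *\<^sub>R u) + g z
       = h * h * gvu (z + s2 *\<^sub>R v + r2 *\<^sub>R u)"
  proof -
    have "\<And>s r. 0 \<le> s \<Longrightarrow> s \<le> h \<Longrightarrow> 0 \<le> r \<Longrightarrow> r \<le> h \<Longrightarrow> z + s *\<^sub>R v + r *\<^sub>R u \<in> S"
      using inS by blast
    from second_diff[OF dv dvu h this] show ?thesis using that by blast
  qed
  have e2: "(z + h *\<^sub>R v) + h *\<^sub>R u = (z + h *\<^sub>R u) + h *\<^sub>R v" by (simp add: algebra_simps)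
  have Aeq: "g ((z + h *\<^sub>R u) + h *\<^sub>R v) - g (z + h *\<^sub>R u) - g (z + h *\<^sub>R v) + g z
       = h * h * guv (z + s1 *\<^sub>R u + r1 *\<^sub>R v)" using A(5) unfolding e2 .
  have "h * h * guv (z + s1 *\<^sub>R u + r1 *\<^sub>R v) = h * h * gvu (z + s2 *\<^sub>R v + r2 *\<^sub>R u)"
    using Aeq B(5) by linarith
  then have eq: "guv (z + s1 *\<^sub>R u + r1 *\<^sub>R v) = gvu (z + s2 *\<^sub>R v + r2 *\<^sub>R u)" using h by simp
  have "dist (guv (z + s1 *\<^sub>R u + r1 *\<^sub>R v)) (guv z) < d/2"
    using d1(2) close[of s1 r1 u v] A \<delta>_def by simp
  moreover have "dist (gvu (z + s2 *\<^sub>R v + r2 *\<^sub>R u)) (gvu z) < d/2"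
    using d2(2) close[of s2 r2 v u] B \<delta>_def by simp
  ultimately have i1: "\<bar>guv (z + s1 *\<^sub>R u + r1 *\<^sub>R v) - guv z\<bar> < d/2"
     "\<bar>guv (z + s1 *\<^sub>R u + r1 *\<^sub>R v) - gvu z\<bar> < d/2"
    using eq unfolding dist_real_def by auto
  then have "\<bar>guv z - gvu z\<bar> < d" unfolding abs_less_iff by linarith
  then show False unfolding d_def by simp
qed

lemma dirderiv:
  assumes "h differentiable (at p)"
  shows "((\<lambda>s. h (p + s *\<^sub>R w)) has_vector_derivative frechet_derivative h (at p) w) (at 0)"
proof -
  have "((\<lambda>s. p + s *\<^sub>R w) has_derivative (\<lambda>s. s *\<^sub>R w)) (at 0)"
    by (auto intro!: derivative_eq_intros)
  from has_derivative_compose[OF this] fd_works[OF assms]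
  have "((\<lambda>s. h (p + s *\<^sub>R w)) has_derivative (\<lambda>s. frechet_derivative h (at p) (s *\<^sub>R w))) (at 0)"
    using has_derivative_compose by fastforce
  moreover have "linear (frechet_derivative h (at p))" using linear_frechet_derivative[OF assms] .
  ultimately show ?thesis unfolding has_vector_derivative_def by (simp add: linear_scale)
qed

lemma dirderiv_inner:
  assumes "h differentiable (at p)"
  shows "((\<lambda>s. h (p + s *\<^sub>R w) \<bullet> b) has_real_derivative (frechet_derivative h (at p) w \<bullet> b)) (at 0)"
  unfolding has_real_derivative_iff_has_vector_derivative
  by (rule bounded_linear.has_vector_derivative[OF bounded_linear_inner_left dirderiv[OF assms]])

lemma clairaut:
  fixes g :: "'a::euclidean_space \<Rightarrow> 'b::euclidean_space"
  assumes S: "open S" "smooth_on S g" "z \<in> S" and uv: "u \<in> Basis" "v \<in> Basis"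
  shows "frechet_derivative (\<lambda>p. frechet_derivative g (at p) u) (at z) v
       = frechet_derivative (\<lambda>p. frechet_derivative g (at p) v) (at z) u"
proof -
  define Gu where "Gu = (\<lambda>p. frechet_derivative g (at p) u)"
  define Gv where "Gv = (\<lambda>p. frechet_derivative g (at p) v)"
  have sGu: "smooth_on S Gu" unfolding Gu_def by (rule smooth_D[OF S(2) uv(1)])
  have sGv: "smooth_on S Gv" unfolding Gv_def by (rule smooth_D[OF S(2) uv(2)])
  have sGuv: "smooth_on S (\<lambda>p. frechet_derivative Gu (at p) v)" by (rule smooth_D[OF sGu uv(2)])
  have sGvu: "smooth_on S (\<lambda>p. frechet_derivative Gv (at p) u)" by (rule smooth_D[OF sGv uv(1)])
  have c1: "isCont (\<lambda>p. frechet_derivative Gu (at p) v) z"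
    using smooth_cont[OF sGuv] S continuous_on_eq_continuous_at by blast
  have c2: "isCont (\<lambda>p. frechet_derivative Gv (at p) u) z"
    using smooth_cont[OF sGvu] S continuous_on_eq_continuous_at by blast
  have "frechet_derivative Gu (at z) v \<bullet> b = frechet_derivative Gv (at z) u \<bullet> b" if b: "b \<in> Basis" for b
  proof (rule clairaut_real[OF S(1) S(3), where g="\<lambda>p. g p \<bullet> b" and u=u and v=v
        and gu="\<lambda>p. Gu p \<bullet> b" and gv="\<lambda>p. Gv p \<bullet> b"
        and guv="\<lambda>p. frechet_derivative Gu (at p) v \<bullet> b"
        and gvu="\<lambda>p. frechet_derivative Gv (at p) u \<bullet> b"])
    fix p assume p: "p \<in> S"
    show "((\<lambda>s. g (p + s *\<^sub>R u) \<bullet> b) has_real_derivative Gu p \<bullet> b) (at 0)"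
      unfolding Gu_def by (rule dirderiv_inner[OF smooth_at[OF S(2,1) p]])
    show "((\<lambda>s. g (p + s *\<^sub>R v) \<bullet> b) has_real_derivative Gv p \<bullet> b) (at 0)"
      unfolding Gv_def by (rule dirderiv_inner[OF smooth_at[OF S(2,1) p]])
    show "((\<lambda>s. Gu (p + s *\<^sub>R v) \<bullet> b) has_real_derivative frechet_derivative Gu (at p) v \<bullet> b) (at 0)"
      by (rule dirderiv_inner[OF smooth_at[OF sGu S(1) p]])
    show "((\<lambda>s. Gv (p + s *\<^sub>R u) \<bullet> b) has_real_derivative frechet_derivative Gv (at p) u \<bullet> b) (at 0)"
      by (rule dirderiv_inner[OF smooth_at[OF sGv S(1) p]])
  next
    show "isCont (\<lambda>p. frechet_derivative Gu (at p) v \<bullet> b) z"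
      using c1 by (intro continuous_intros)
    show "isCont (\<lambda>p. frechet_derivative Gv (at p) u \<bullet> b) z"
      using c2 by (intro continuous_intros)
  qed
  then have "frechet_derivative Gu (at z) v = frechet_derivative Gv (at z) u"
    by (rule euclidean_eqI)
  then show ?thesis unfolding Gu_def Gv_def .
qed



lemma minv:
  assumes "invertible (A::real^'n::finite^'n)"
  shows "A ** matrix_inv A = mat 1" "matrix_inv A ** A = mat 1"
proof -
  from assms obtain A' where "A ** A' = mat 1 \<and> A' ** A = mat 1" unfolding invertible_def by blast
  then have "A ** matrix_inv A = mat 1 \<and> matrix_inv A ** A = mat 1"
    unfolding matrix_inv_def by (rule someI)
  then show "A ** matrix_inv A = mat 1" "matrix_inv A ** A = mat 1" by auto
qed

lemma lin_expand:
  fixes L :: "real^'n::finite \<Rightarrow> real^'m::finite"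
  assumes "linear L"
  shows "L c = (\<Sum>i\<in>UNIV. c $ i *\<^sub>R L (axis i 1))"
proof -
  have "L c = L (\<Sum>i\<in>UNIV. c $ i *s axis i 1)" by (simp add: basis_expansion)
  also have "\<dots> = (\<Sum>i\<in>UNIV. c $ i *\<^sub>R L (axis i 1))"
    using assms by (simp add: linear_sum linear_scale scalar_mult_eq_scaleR)
  finally show ?thesis .
qed

lemma gram_invertible:
  fixes L :: "real^'n::finite \<Rightarrow> real^'m::finite"
  assumes L: "linear L" "inj L"
  shows "invertible (\<chi> i j. L (axis i 1) \<bullet> L (axis j 1))"
proof -
  define G where "G = (\<chi> i j. L (axis i 1) \<bullet> L (axis j 1))"
  have Gv: "(G *v c) $ i = L (axis i 1) \<bullet> L c" for c i
    by (simp add: G_def matrix_vector_mult_def lin_expand[OF L(1), of c] inner_sum_right mult.commute)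
  have "inj ((*v) G)"
  proof (subst linear_injective_0)
    show "linear ((*v) G)" by (rule matrix_vector_mul_linear)
    show "\<forall>c. G *v c = 0 \<longrightarrow> c = 0"
    proof (intro allI impI)
      fix c assume "G *v c = 0"
      then have z: "L (axis i 1) \<bullet> L c = 0" for i using Gv[of c i] by simp
      have "L c \<bullet> L c = (\<Sum>i\<in>UNIV. c $ i * (L (axis i 1) \<bullet> L c))"
        by (subst (1) lin_expand[OF L(1), of c]) (simp add: inner_sum_left)
      also have "\<dots> = 0" using z by simp
      finally have "L c = 0" by simp
      then show "c = 0" using L linear_injective_0 by blast
    qed
  qed
  then obtain B where "B ** G = mat 1" using matrix_left_invertible_injective by blast
  then have "G ** B = mat 1" using matrix_left_right_inverse by blast
  with \<open>B ** G = mat 1\<close> show ?thesis unfolding G_def[symmetric] invertible_def by blast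
qed

lemma decomp:
  fixes L :: "real^'n::finite \<Rightarrow> real^'m::finite"
  assumes L: "linear L" "inj L" and dim: "CARD('m) = CARD('n) + 1"
    and N1: "Nv \<bullet> Nv = 1" and N0: "\<And>i. Nv \<bullet> L (axis i 1) = 0"
  shows "w = (w \<bullet> Nv) *\<^sub>R Nv + (\<Sum>m\<in>UNIV. (\<Sum>p\<in>UNIV.
            matrix_inv (\<chi> i j. L (axis i 1) \<bullet> L (axis j 1)) $ m $ p * (w \<bullet> L (axis p 1))) *\<^sub>R L (axis m 1))"
proof -
  define G where "G = (\<chi> i j. L (axis i 1) \<bullet> L (axis j 1))"
  define X where "X = matrix_inv G"
  have GX: "G ** X = mat 1" using minv[OF gram_invertible[OF L]] unfolding G_def X_def by simp
  define c where "c = (\<lambda>m. \<Sum>p\<in>UNIV. X $ m $ p * (w \<bullet> L (axis p 1)))"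
  define u where "u = w - ((w \<bullet> Nv) *\<^sub>R Nv + (\<Sum>m\<in>UNIV. c m *\<^sub>R L (axis m 1)))"
  have N0': "L (axis i 1) \<bullet> Nv = 0" for i using N0[of i] by (simp add: inner_commute)
  have uN: "u \<bullet> Nv = 0"
    unfolding u_def using N1 N0' by (simp add: inner_diff_left inner_add_left inner_sum_left)
  have uL: "u \<bullet> L (axis q 1) = 0" for q
  proof -
    have "(\<Sum>m\<in>UNIV. c m * (L (axis m 1) \<bullet> L (axis q 1)))
        = (\<Sum>m\<in>UNIV. \<Sum>p\<in>UNIV. (w \<bullet> L (axis p 1)) * (G $ q $ m * X $ m $ p))"
    proof (rule sum.cong[OF refl])
      fix m
      have Gs: "G $ q $ m = L (axis m 1) \<bullet> L (axis q 1)" by (simp add: G_def inner_commute)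
      show "c m * (L (axis m 1) \<bullet> L (axis q 1)) = (\<Sum>p\<in>UNIV. (w \<bullet> L (axis p 1)) * (G $ q $ m * X $ m $ p))"
        unfolding c_def Gs by (simp add: sum_distrib_left mult_ac)
    qed
    also have "\<dots> = (\<Sum>p\<in>UNIV. (w \<bullet> L (axis p 1)) * (G ** X) $ q $ p)"
      by (subst sum.swap) (simp add: matrix_matrix_mult_def sum_distrib_left)
    also have "\<dots> = w \<bullet> L (axis q 1)"
      unfolding GX by (simp add: mat_def if_distrib cong: if_cong)
    finally have e: "(\<Sum>m\<in>UNIV. c m * (L (axis m 1) \<bullet> L (axis q 1))) = w \<bullet> L (axis q 1)" .
    show ?thesis unfolding u_def using N0' N0 e
      by (simp add: inner_diff_left inner_add_left inner_sum_left)
  qed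
  define B where "B = L ` Basis"
  have Bfin: "finite B" unfolding B_def by simp
  have indB: "independent B" unfolding B_def
    using real_vector.linear_independent_injective_image[OF L(1) independent_Basis] L(2)
    by (meson inj_on_subset subset_UNIV)
  have cardB: "card B = CARD('n)" unfolding B_def
    using card_image[of L Basis] L(2) by (simp add: inj_on_def inj_def)
  have Brange: "B = range (\<lambda>i. L (axis i 1))" unfolding B_def Basis_vec_def by auto
  have orthB: "orthogonal Nv y" if "y \<in> span B" for y
    using orthogonal_to_span[OF that] N0 unfolding Brange orthogonal_def by auto
  have Nnot: "Nv \<notin> span B" using orthB[of Nv] N1 unfolding orthogonal_def by auto
  have Nnot2: "Nv \<notin> B" using Nnot span_base by blast
  have ind2: "independent (insert Nv B)" using indB Nnot by (simp add: independent_insert Nnot2)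
  have card2: "card (insert Nv B) = CARD('m)" using cardB Bfin Nnot2 dim by simp
  have "UNIV \<subseteq> span (insert Nv B)"
    by (rule card_ge_dim_independent[OF subset_UNIV ind2]) (simp add: card2)
  then have "u \<in> span (insert Nv B)" by blast
  moreover have "orthogonal u y" if "y \<in> insert Nv B" for y
    using that uN uL unfolding Brange orthogonal_def by (auto simp: inner_commute)
  ultimately have "orthogonal u u" using orthogonal_to_span by blast
  then have "u = 0" unfolding orthogonal_def by simp
  then show ?thesis unfolding u_def c_def X_def G_def by simp
qed



lemma cramer_inv:
  fixes A :: "real^'n::finite^'n"
  assumes "invertible A"
  shows "matrix_inv A $ k $ l = det (\<chi> i j. if j = k then axis l 1 $ i else A $ i $ j) / det A"
proof -
  have d: "det A \<noteq> 0" using assms invertible_det_nz by blast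
  have "A *v (matrix_inv A *v axis l 1) = axis l 1"
    by (simp only: matrix_vector_mul_assoc minv[OF assms] matrix_vector_mul_lid)
  then have "matrix_inv A *v axis l 1 = (\<chi> k. det (\<chi> i j. if j = k then axis l 1 $ i else A $ i $ j) / det A)"
    by (rule cramer[OF d, THEN iffD1])
  then have "(matrix_inv A *v axis l 1) $ k = det (\<chi> i j. if j = k then axis l 1 $ i else A $ i $ j) / det A"
    by simp
  moreover have "(matrix_inv A *v axis l 1) $ k = matrix_inv A $ k $ l"
    by (simp add: matrix_vector_mult_def axis_def if_distrib cong: if_cong)
  ultimately show ?thesis by simp
qed

lemma det_differentiable:
  fixes C :: "real \<Rightarrow> real^'n::finite^'n"
  assumes "\<And>i j. (\<lambda>t. C t $ i $ j) differentiable (at t0)"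
  shows "(\<lambda>t. det (C t)) differentiable (at t0)"
  unfolding det_def
proof (rule differentiable_sum, simp, intro ballI)
  fix p :: "'n \<Rightarrow> 'n"
  have "\<forall>i. \<exists>D. ((\<lambda>t. C t $ i $ p i) has_derivative D) (at t0)"
    using assms unfolding differentiable_def by blast
  then obtain D where D: "\<And>i. ((\<lambda>t. C t $ i $ p i) has_derivative D i) (at t0)" by metis
  have "(\<lambda>t. \<Prod>i\<in>UNIV. C t $ i $ p i) differentiable (at t0)"
    unfolding differentiable_def using has_derivative_prod[of UNIV "\<lambda>i t. C t $ i $ p i" D] D by blast
  then show "(\<lambda>t. of_int (sign p) * (\<Prod>i\<in>UNIV. C t $ i $ p i)) differentiable (at t0)"
    by (intro differentiable_mult differentiable_const)
qed

lemma neg_mmult: "(- A) ** (B::real^'n::finite^'n) = - (A ** B)"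
  by (simp add: matrix_matrix_mult_def vec_eq_iff sum_negf)

lemma inv_deriv:
  fixes M :: "real \<Rightarrow> real^'n::finite^'n"
  assumes I: "open I" "0 \<in> I" "\<And>t. t \<in> I \<Longrightarrow> invertible (M t)"
    and dM: "\<And>i j. ((\<lambda>t. M t $ i $ j) has_real_derivative M' $ i $ j) (at 0)"
  shows "((\<lambda>t. matrix_inv (M t) $ k $ l) has_real_derivative
           (- (matrix_inv (M 0) ** M' ** matrix_inv (M 0))) $ k $ l) (at 0)"
proof -
  have ex: "\<exists>d. ((\<lambda>t. matrix_inv (M t) $ k $ l) has_real_derivative d) (at 0)" for k l
  proof -
    define Q where "Q = (\<lambda>t. det (\<chi> i j. if j = k then axis l 1 $ i else M t $ i $ j) / det (M t))"
    have Mdiff: "(\<lambda>t. M t $ i $ j) differentiable (at 0)" for i j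
      using dM[of i j] real_differentiable_def by blast
    have "(\<lambda>t. det (\<chi> i j. if j = k then axis l 1 $ i else M t $ i $ j)) differentiable (at 0)"
    proof (rule det_differentiable)
      fix i j show "(\<lambda>t. (\<chi> i j. if j = k then axis l 1 $ i else M t $ i $ j) $ i $ j) differentiable (at 0)"
        by (cases "j = k") (simp_all add: Mdiff)
    qed
    moreover have "(\<lambda>t. det (M t)) differentiable (at 0)"
      by (rule det_differentiable) (simp add: Mdiff)
    moreover have "det (M 0) \<noteq> 0" using I invertible_det_nz by blast
    ultimately have "Q differentiable (at 0)" unfolding Q_def by (rule differentiable_divide)
    then obtain d where "(Q has_real_derivative d) (at 0)" using real_differentiable_def by blast
    then have "((\<lambda>t. matrix_inv (M t) $ k $ l) has_real_derivative d) (at 0)"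
      by (rule has_field_derivative_transform_within_open[OF _ I(1,2)])
         (simp add: Q_def cramer_inv I(3))
    then show ?thesis by blast
  qed
  then have "\<forall>k l. \<exists>d. ((\<lambda>t. matrix_inv (M t) $ k $ l) has_real_derivative d) (at 0)" by blast
  then obtain d where d: "\<And>k l. ((\<lambda>t. matrix_inv (M t) $ k $ l) has_real_derivative d k l) (at 0)"
    by metis
  define D where "D = (\<chi> k l. d k l)"
  define X0 where "X0 = matrix_inv (M 0)"
  have DM: "(D ** M 0) $ i $ j = (- (X0 ** M')) $ i $ j" for i j
  proof -
    have 1: "((\<lambda>t. \<Sum>k\<in>UNIV. matrix_inv (M t) $ i $ k * M t $ k $ j) has_real_derivative
        (\<Sum>k\<in>UNIV. matrix_inv (M 0) $ i $ k * M' $ k $ j + d i k * M 0 $ k $ j)) (at 0)"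
      unfolding has_real_derivative_iff_has_vector_derivative
      by (intro has_vector_derivative_sum has_vector_derivative_mult
          d[unfolded has_real_derivative_iff_has_vector_derivative]
          dM[unfolded has_real_derivative_iff_has_vector_derivative])
    have "((\<lambda>t. mat 1 $ i $ j) has_real_derivative 0) (at 0)" by simp
    then have 2: "((\<lambda>t. \<Sum>k\<in>UNIV. matrix_inv (M t) $ i $ k * M t $ k $ j) has_real_derivative 0) (at 0)"
    proof (rule has_field_derivative_transform_within_open[OF _ I(1,2)])
      fix t assume "t \<in> I"
      then have "matrix_inv (M t) ** M t = mat 1" using minv I(3) by blast
      then have "(matrix_inv (M t) ** M t) $ i $ j = mat 1 $ i $ j" by simp
      then show "mat 1 $ i $ j = (\<Sum>k\<in>UNIV. matrix_inv (M t) $ i $ k * M t $ k $ j)"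
        unfolding matrix_matrix_mult_def by simp
    qed
    have "(\<Sum>k\<in>UNIV. matrix_inv (M 0) $ i $ k * M' $ k $ j + d i k * M 0 $ k $ j) = 0"
      using DERIV_unique[OF 1 2] .
    then show ?thesis
      by (simp add: D_def X0_def matrix_matrix_mult_def sum.distrib eq_neg_iff_add_eq_0 add.commute)
  qed
  then have DM': "D ** M 0 = - (X0 ** M')" by (simp add: vec_eq_iff)
  have "D = D ** (M 0 ** X0)" unfolding X0_def using minv[OF I(3)[OF I(2)]] by simp
  also have "\<dots> = (D ** M 0) ** X0" by (simp only: matrix_mul_assoc)
  also have "\<dots> = - (X0 ** M' ** X0)" by (simp only: DM' neg_mmult)
  finally have "D = - (X0 ** M' ** X0)" .
  then show ?thesis using d[of k l] unfolding D_def X0_def by (metis vec_lambda_beta)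
qed



definition Dd :: "'a::real_normed_vector \<Rightarrow> ('a \<Rightarrow> 'b::real_normed_vector) \<Rightarrow> 'a \<Rightarrow> 'b" where
  "Dd b g z = frechet_derivative g (at z) b"

definition e0 :: "real \<times> 'a::real_normed_vector" where "e0 = (1, 0)"
definition ei :: "'n::finite \<Rightarrow> real \<times> (real^'n)" where "ei i = (0, axis i 1)"

lemma e0_Basis: "(e0 :: real \<times> 'a::euclidean_space) \<in> Basis"
  by (simp add: e0_def Basis_prod_def)

lemma ei_Basis: "ei i \<in> Basis"
  by (auto simp: ei_def Basis_prod_def Basis_vec_def)

lemma Dd_fun: "Dd b g = (\<lambda>z. frechet_derivative g (at z) b)"
  by (rule ext) (simp add: Dd_def)

lemma smooth_Dd: "smooth_on S g \<Longrightarrow> b \<in> Basis \<Longrightarrow> smooth_on S (Dd b g)"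
  unfolding Dd_fun by (rule smooth_D)

lemma clairaut_Dd:
  fixes g :: "'a::euclidean_space \<Rightarrow> 'b::euclidean_space"
  assumes "open S" "smooth_on S g" "z \<in> S" "u \<in> Basis" "v \<in> Basis"
  shows "Dd v (Dd u g) z = Dd u (Dd v g) z"
  unfolding Dd_fun using clairaut[OF assms] by simp

lemma Dd_local:
  assumes "open S" "z \<in> S" "\<And>y. y \<in> S \<Longrightarrow> g y = h y"
  shows "Dd b g z = Dd b h z"
  unfolding Dd_def using fd_local[OF assms] by simp

lemma pd_slice:
  fixes g :: "real \<times> (real^'n::finite) \<Rightarrow> 'b::real_normed_vector"
  assumes "g differentiable (at (t,y))"
  shows "pd i (\<lambda>w. g (t,w)) y = Dd (ei i) g (t,y)"
  unfolding Dd_def ei_def using K1pd[OF assms] .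

lemma dt_slice:
  fixes g :: "real \<times> 'a::real_normed_vector \<Rightarrow> 'b::real_normed_vector"
  assumes "g differentiable (at (t,y))"
  shows "((\<lambda>s. g (s,y)) has_vector_derivative Dd e0 g (t,y)) (at t)"
  unfolding Dd_def e0_def using K2[OF assms] .

lemma K3_Dd:
  fixes a c :: "'a::real_normed_vector \<Rightarrow> 'b::real_inner"
  assumes "open S" "z \<in> S" "a differentiable (at z)" "c differentiable (at z)"
    "\<And>p. p \<in> S \<Longrightarrow> a p \<bullet> c p = k"
  shows "Dd b a z \<bullet> c z + a z \<bullet> Dd b c z = 0"
  unfolding Dd_def using K3[OF assms] .

lemma smult_mmult: "(k *\<^sub>R A) ** (B::real^'n::finite^'n) = k *\<^sub>R (A ** B)"
  by (simp add: matrix_matrix_mult_def vec_eq_iff sum_distrib_left mult.assoc)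

lemma mmult_smult: "A ** (k *\<^sub>R B) = k *\<^sub>R (A ** (B::real^'n::finite^'n))"
  by (simp add: matrix_matrix_mult_def vec_eq_iff sum_distrib_left mult_ac)

lemma inner_hvd:
  fixes a c :: "real \<Rightarrow> 'b::real_inner"
  assumes "(a has_vector_derivative a') (at t)" "(c has_vector_derivative c') (at t)"
  shows "((\<lambda>s. a s \<bullet> c s) has_vector_derivative (a t \<bullet> c' + a' \<bullet> c t)) (at t)"
  using bounded_bilinear.has_vector_derivative[OF bounded_bilinear_inner assms] .

theorem mainTheorem5:
  fixes \<epsilon> :: real and U :: "(real^'n::finite) set"
    and f :: "real^'n \<Rightarrow> real^'m::finite"
    and F :: "real \<Rightarrow> real^'n \<Rightarrow> real^'m"
    and \<gamma> :: "real \<Rightarrow> real^'n \<Rightarrow> real"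
    and Nt :: "real \<Rightarrow> real^'n \<Rightarrow> real^'m"
  assumes dim: "CARD('m) = CARD('n) + 1"
    and imm: "immersion_on U f"
    and var: "conformal_inf_variation \<epsilon> U f F \<gamma>"
    and Nsmooth: "smooth_on ({-\<epsilon><..<\<epsilon>} \<times> U) (\<lambda>(t,x). Nt t x)"
    and Nnormal: "\<forall>t\<in>{-\<epsilon><..<\<epsilon>}. unit_normal_on U (F t) (Nt t)"
  shows "\<forall>x\<in>U.
           B_tensor f (Nt 0) (\<lambda>y. dt0 (\<lambda>t. F t y)) (\<lambda>y. - (1/2) * dt0 (\<lambda>t. \<gamma> t y)) x
           = dt0 (\<lambda>t. shape_op (F t) (Nt t) x)
             + (- (1/2) * dt0 (\<lambda>t. \<gamma> t x)) *\<^sub>R shape_op f (Nt 0) x"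
proof
  fix x assume xU: "x \<in> U"
  have eps: "0 < \<epsilon>" and oU: "open U"
    and sF: "smooth_on ({-\<epsilon><..<\<epsilon>} \<times> U) (\<lambda>(t,x). F t x)"
    and sG: "smooth_on ({-\<epsilon><..<\<epsilon>} \<times> U) (\<lambda>(t,x). \<gamma> t x)"
    and immt: "\<forall>t\<in>{-\<epsilon><..<\<epsilon>}. immersion_on U (F t)"
    and F0: "\<forall>x\<in>U. F 0 x = f x"
    and g0: "\<forall>x\<in>U. \<gamma> 0 x = 1"
    and conf: "\<forall>x\<in>U. \<forall>i j. dt0 (\<lambda>t. \<gamma> t x * (pd i (F t) x \<bullet> pd j (F t) x)) = 0"
    using var unfolding conformal_inf_variation_def by auto
  define I where "I = {-\<epsilon><..<\<epsilon>}"
  define S where "S = I \<times> U"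
  define \<Phi> :: "real \<times> (real^'n) \<Rightarrow> real^'m" where "\<Phi> = (\<lambda>(t,x). F t x)"
  define \<Psi> :: "real \<times> (real^'n) \<Rightarrow> real^'m" where "\<Psi> = (\<lambda>(t,x). Nt t x)"
  define \<Gamma> :: "real \<times> (real^'n) \<Rightarrow> real" where "\<Gamma> = (\<lambda>(t,x). \<gamma> t x)"
  have oI: "open I" unfolding I_def by simp
  have I0: "0 \<in> I" unfolding I_def using eps by simp
  have oS: "open S" unfolding S_def using oI oU by (simp add: open_Times)
  have x0S: "(0, x) \<in> S" unfolding S_def using I0 xU by simp
  have sPhi: "smooth_on S \<Phi>" using sF unfolding S_def I_def \<Phi>_def .
  have sPsi: "smooth_on S \<Psi>" using Nsmooth unfolding S_def I_def \<Psi>_def .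
  have sGam: "smooth_on S \<Gamma>" using sG unfolding S_def I_def \<Gamma>_def .
  have dS: "g differentiable (at z)" if "smooth_on S g" "z \<in> S" for g :: "real \<times> (real^'n) \<Rightarrow> real^'m" and z
    using smooth_at[OF that(1) oS that(2)] .
  have dSr: "g differentiable (at z)" if "smooth_on S g" "z \<in> S" for g :: "real \<times> (real^'n) \<Rightarrow> real" and z
    using smooth_at[OF that(1) oS that(2)] .
  note sD = smooth_Dd[OF _ ei_Basis] smooth_Dd[OF _ e0_Basis]
  have pdF: "pd i (F t) y = Dd (ei i) \<Phi> (t,y)" if "t \<in> I" "y \<in> U" for i t y
  proof -
    have "(\<lambda>w. \<Phi> (t,w)) = F t" by (simp add: \<Phi>_def)
    with pd_slice[OF dS[OF sPhi], of t y i] that show ?thesis by (simp add: S_def)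
  qed
  have pdN: "pd i (Nt t) y = Dd (ei i) \<Psi> (t,y)" if "t \<in> I" "y \<in> U" for i t y
  proof -
    have "(\<lambda>w. \<Psi> (t,w)) = Nt t" by (simp add: \<Psi>_def)
    with pd_slice[OF dS[OF sPsi], of t y i] that show ?thesis by (simp add: S_def)
  qed
  have pdf: "pd i f y = Dd (ei i) \<Phi> (0,y)" if "y \<in> U" for i y
  proof -
    have "pd i f y = pd i (F 0) y" using pd_local[OF oU that, of f "F 0"] F0 by simp
    then show ?thesis using pdF[OF I0 that] by simp
  qed
  have pdpdf: "pd j (pd l f) x = Dd (ei j) (Dd (ei l) \<Phi>) (0,x)" for j l
  proof -
    have "pd j (pd l f) x = pd j (\<lambda>w. Dd (ei l) \<Phi> (0,w)) x"
      using pd_local[OF oU xU, of "pd l f" "\<lambda>w. Dd (ei l) \<Phi> (0,w)"] pdf by simp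
    also have "\<dots> = Dd (ei j) (Dd (ei l) \<Phi>) (0,x)"
      by (rule pd_slice[OF dS[OF sD(1)[OF sPhi] x0S]])
    finally show ?thesis .
  qed
  define T where "T = (\<lambda>y. dt0 (\<lambda>t. F t y))"
  have Ty: "T y = Dd e0 \<Phi> (0,y)" if "y \<in> U" for y
  proof -
    have "(0,y) \<in> S" using that I0 by (simp add: S_def)
    from dt_slice[OF dS[OF sPhi this]] have "((\<lambda>t. F t y) has_vector_derivative Dd e0 \<Phi> (0,y)) (at 0)"
      by (simp add: \<Phi>_def)
    then show ?thesis unfolding T_def dt0_def by (rule vector_derivative_at)
  qed
  have pdT: "pd l T y = Dd (ei l) (Dd e0 \<Phi>) (0,y)" if "y \<in> U" for l y
  proof -
    have yS: "(0,y) \<in> S" using that I0 by (simp add: S_def)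
    have "pd l T y = pd l (\<lambda>w. Dd e0 \<Phi> (0,w)) y"
      using pd_local[OF oU that, of T "\<lambda>w. Dd e0 \<Phi> (0,w)"] Ty by simp
    also have "\<dots> = Dd (ei l) (Dd e0 \<Phi>) (0,y)"
      by (rule pd_slice[OF dS[OF sD(2)[OF sPhi] yS]])
    finally show ?thesis .
  qed
  have pdpdT: "pd j (pd l T) x = Dd (ei j) (Dd (ei l) (Dd e0 \<Phi>)) (0,x)" for j l
  proof -
    have "pd j (pd l T) x = pd j (\<lambda>w. Dd (ei l) (Dd e0 \<Phi>) (0,w)) x"
      using pd_local[OF oU xU, of "pd l T" "\<lambda>w. Dd (ei l) (Dd e0 \<Phi>) (0,w)"] pdT by simp
    also have "\<dots> = Dd (ei j) (Dd (ei l) (Dd e0 \<Phi>)) (0,x)"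
      by (rule pd_slice[OF dS[OF sD(1)[OF sD(2)[OF sPhi]] x0S]])
    finally show ?thesis .
  qed
  have dgam: "((\<lambda>t. \<gamma> t x) has_vector_derivative Dd e0 \<Gamma> (0,x)) (at 0)"
    using dt_slice[OF dSr[OF sGam x0S]] by (simp add: \<Gamma>_def)
  have dt0gam: "dt0 (\<lambda>t. \<gamma> t x) = Dd e0 \<Gamma> (0,x)"
    unfolding dt0_def by (rule vector_derivative_at[OF dgam])

  have O1: "\<Psi> z \<bullet> Dd (ei l) \<Phi> z = 0" if zS: "z \<in> S" for z l
  proof -
    obtain t y where z: "z = (t,y)" "t \<in> I" "y \<in> U" using zS unfolding S_def by auto
    have "unit_normal_on U (F t) (Nt t)" using Nnormal z(2) unfolding I_def by blast
    then have "Nt t y \<bullet> pd l (F t) y = 0" using z(3) unfolding unit_normal_on_def by blast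
    then show ?thesis using pdF[OF z(2,3)] z(1) by (simp add: \<Psi>_def)
  qed
  have O2: "\<Psi> z \<bullet> \<Psi> z = 1" if zS: "z \<in> S" for z
  proof -
    obtain t y where z: "z = (t,y)" "t \<in> I" "y \<in> U" using zS unfolding S_def by auto
    have "unit_normal_on U (F t) (Nt t)" using Nnormal z(2) unfolding I_def by blast
    then have "norm (Nt t y) = 1" using z(3) unfolding unit_normal_on_def by blast
    then show ?thesis using z(1) by (simp add: \<Psi>_def norm_eq_1)
  qed
  have E1: "Dd (ei j) \<Psi> z \<bullet> Dd (ei l) \<Phi> z + \<Psi> z \<bullet> Dd (ei j) (Dd (ei l) \<Phi>) z = 0" if "z \<in> S" for z j l
    by (rule K3_Dd[OF oS that dS[OF sPsi that] dS[OF sD(1)[OF sPhi] that] O1])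
  have E2: "Dd e0 \<Psi> (0,x) \<bullet> Dd (ei m) \<Phi> (0,x) + \<Psi> (0,x) \<bullet> Dd e0 (Dd (ei m) \<Phi>) (0,x) = 0" for m
    by (rule K3_Dd[OF oS x0S dS[OF sPsi x0S] dS[OF sD(1)[OF sPhi] x0S] O1])
  have E3: "Dd e0 \<Psi> (0,x) \<bullet> \<Psi> (0,x) = 0"
  proof -
    have "Dd e0 \<Psi> (0,x) \<bullet> \<Psi> (0,x) + \<Psi> (0,x) \<bullet> Dd e0 \<Psi> (0,x) = 0"
      by (rule K3_Dd[OF oS x0S dS[OF sPsi x0S] dS[OF sPsi x0S] O2])
    then show ?thesis by (simp add: inner_commute)
  qed
  have C1: "Dd e0 (Dd (ei m) \<Phi>) z = Dd (ei m) (Dd e0 \<Phi>) z" if "z \<in> S" for z m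
    by (rule clairaut_Dd[OF oS sPhi that ei_Basis e0_Basis])
  have C2: "Dd e0 (Dd (ei j) (Dd (ei l) \<Phi>)) (0,x) = Dd (ei j) (Dd (ei l) (Dd e0 \<Phi>)) (0,x)" for j l
  proof -
    have "Dd e0 (Dd (ei j) (Dd (ei l) \<Phi>)) (0,x) = Dd (ei j) (Dd e0 (Dd (ei l) \<Phi>)) (0,x)"
      by (rule clairaut_Dd[OF oS sD(1)[OF sPhi] x0S ei_Basis e0_Basis])
    also have "\<dots> = Dd (ei j) (Dd (ei l) (Dd e0 \<Phi>)) (0,x)"
      by (rule Dd_local[OF oS x0S]) (rule C1)
    finally show ?thesis .
  qed
  define Nv where "Nv = Nt 0 x"
  have NvPsi: "\<Psi> (0,x) = Nv" by (simp add: Nv_def \<Psi>_def)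
  define P where "P = (\<lambda>l. pd l f x)"
  have PPhi: "P l = Dd (ei l) \<Phi> (0,x)" for l unfolding P_def by (rule pdf[OF xU])
  define L where "L = frechet_derivative f (at x)"
  have fdiff: "f differentiable (at x)"
    using imm unfolding immersion_on_def using smooth_at xU by blast
  have Llin: "linear L" unfolding L_def by (rule linear_frechet_derivative[OF fdiff])
  have Linj: "inj L" using imm xU unfolding immersion_on_def L_def by blast
  have PL: "P l = L (axis l 1)" for l unfolding P_def L_def pd_def ..
  have N1: "Nv \<bullet> Nv = 1" using O2[OF x0S] NvPsi by simp
  have N0: "Nv \<bullet> L (axis i 1) = 0" for i using O1[OF x0S, of i] NvPsi PPhi[of i] PL[of i] by simp
  define G0 where "G0 = metric f x"
  have G0L: "G0 = (\<chi> i j. L (axis i 1) \<bullet> L (axis j 1))"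
    unfolding G0_def metric_def L_def pd_def ..
  define X0 where "X0 = metric_inv f x"
  have X0G: "X0 = matrix_inv G0" unfolding X0_def G0_def metric_inv_def ..
  have Ginv: "invertible G0" unfolding G0L by (rule gram_invertible[OF Llin Linj])
  have dec: "w = (w \<bullet> Nv) *\<^sub>R Nv + (\<Sum>m\<in>UNIV. (\<Sum>p\<in>UNIV. X0 $ m $ p * (w \<bullet> P p)) *\<^sub>R P m)" for w
    using decomp[OF Llin Linj dim N1 N0, of w] unfolding X0G G0L PL .
  define M where "M = (\<lambda>t. metric (F t) x)"
  have Minv: "invertible (M t)" if "t \<in> I" for t
  proof -
    have it: "immersion_on U (F t)" using immt that unfolding I_def by blast
    have d: "F t differentiable (at x)" using it unfolding immersion_on_def using smooth_at xU by blast
    have "inj (frechet_derivative (F t) (at x))" using it xU unfolding immersion_on_def by blast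
    from gram_invertible[OF linear_frechet_derivative[OF d] this]
    show ?thesis unfolding M_def metric_def pd_def .
  qed
  have M0: "M 0 = G0"
    unfolding M_def G0_def metric_def using pdF[OF I0 xU] pdf[OF xU] by simp
  define g' where "g' = Dd e0 \<Gamma> (0,x)"
  define Mp where "Mp = (\<chi> i j. P i \<bullet> Dd e0 (Dd (ei j) \<Phi>) (0,x) + Dd e0 (Dd (ei i) \<Phi>) (0,x) \<bullet> P j)"
  have dMe: "((\<lambda>t. pd i (F t) x \<bullet> pd j (F t) x) has_vector_derivative Mp $ i $ j) (at 0)" for i j
  proof -
    have "((\<lambda>s. Dd (ei i) \<Phi> (s,x) \<bullet> Dd (ei j) \<Phi> (s,x)) has_vector_derivative
         (Dd (ei i) \<Phi> (0,x) \<bullet> Dd e0 (Dd (ei j) \<Phi>) (0,x) + Dd e0 (Dd (ei i) \<Phi>) (0,x) \<bullet> Dd (ei j) \<Phi> (0,x))) (at 0)"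
      by (rule inner_hvd[OF dt_slice[OF dS[OF sD(1)[OF sPhi] x0S]] dt_slice[OF dS[OF sD(1)[OF sPhi] x0S]]])
    then have "((\<lambda>s. Dd (ei i) \<Phi> (s,x) \<bullet> Dd (ei j) \<Phi> (s,x)) has_vector_derivative Mp $ i $ j) (at 0)"
      by (simp add: Mp_def PPhi)
    then show ?thesis
      by (rule has_vector_derivative_transform_within_open[OF _ oI I0]) (simp add: pdF xU)
  qed
  have Mp_eq: "Mp = (- g') *\<^sub>R G0"
  proof -
    have "Mp $ i $ j = - g' * G0 $ i $ j" for i j
    proof -
      have "((\<lambda>t. \<gamma> t x * (pd i (F t) x \<bullet> pd j (F t) x)) has_vector_derivative
          (\<gamma> 0 x * Mp $ i $ j + g' * (pd i (F 0) x \<bullet> pd j (F 0) x))) (at 0)"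
        unfolding g'_def by (rule has_vector_derivative_mult[OF dgam dMe])
      then have "dt0 (\<lambda>t. \<gamma> t x * (pd i (F t) x \<bullet> pd j (F t) x)) = \<gamma> 0 x * Mp $ i $ j + g' * (pd i (F 0) x \<bullet> pd j (F 0) x)"
        unfolding dt0_def by (rule vector_derivative_at)
      moreover have "pd i (F 0) x \<bullet> pd j (F 0) x = G0 $ i $ j"
        unfolding M0[symmetric] M_def metric_def by simp
      ultimately show ?thesis using conf xU g0 by simp
    qed
    then show ?thesis by (simp add: vec_eq_iff)
  qed
  have dM: "((\<lambda>t. M t $ i $ j) has_real_derivative Mp $ i $ j) (at 0)" for i j
    unfolding has_real_derivative_iff_has_vector_derivative M_def metric_def using dMe by simp
  have dX: "((\<lambda>t. matrix_inv (M t) $ k $ l) has_vector_derivative g' * X0 $ k $ l) (at 0)" for k l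
  proof -
    have "((\<lambda>t. matrix_inv (M t) $ k $ l) has_real_derivative
           (- (matrix_inv (M 0) ** Mp ** matrix_inv (M 0))) $ k $ l) (at 0)"
      by (rule inv_deriv[OF oI I0 Minv dM])
    moreover have "- (matrix_inv (M 0) ** Mp ** matrix_inv (M 0)) = g' *\<^sub>R X0"
    proof -
      have XG: "X0 ** G0 = mat 1" using minv(2)[OF Ginv] X0G by simp
      have "X0 ** ((- g') *\<^sub>R G0) = (- g') *\<^sub>R (X0 ** G0)" by (rule mmult_smult)
      then have "X0 ** ((- g') *\<^sub>R G0) ** X0 = (- g') *\<^sub>R X0"
        by (simp only: XG smult_mmult matrix_mul_lid)
      then show ?thesis unfolding M0 Mp_eq X0G[symmetric] by simp
    qed
    ultimately show ?thesis unfolding has_real_derivative_iff_has_vector_derivative by simp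
  qed
  define Hf where "Hf = (\<lambda>l j t. - (pd j (Nt t) x \<bullet> pd l (F t) x))"
  define S2 where "S2 = (\<lambda>j l. pd j (pd l f) x)"
  have S2Phi: "S2 j l = Dd (ei j) (Dd (ei l) \<Phi>) (0,x)" for j l unfolding S2_def by (rule pdpdf)
  define N' where "N' = Dd e0 \<Psi> (0,x)"
  define Hp where "Hp = (\<lambda>l j. N' \<bullet> S2 j l + Nv \<bullet> Dd e0 (Dd (ei j) (Dd (ei l) \<Phi>)) (0,x))"
  have HfI: "Hf l j t = \<Psi> (t,x) \<bullet> Dd (ei j) (Dd (ei l) \<Phi>) (t,x)" if "t \<in> I" for l j t
  proof -
    have "(t,x) \<in> S" using that xU by (simp add: S_def)
    from E1[OF this, of j l] show ?thesis unfolding Hf_def using pdN[OF that xU] pdF[OF that xU] by simp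
  qed
  have H0: "Hf l j 0 = Nv \<bullet> S2 j l" for l j using HfI[OF I0] NvPsi S2Phi by simp
  have dH: "((\<lambda>t. Hf l j t) has_vector_derivative Hp l j) (at 0)" for l j
  proof -
    have "((\<lambda>s. \<Psi> (s,x) \<bullet> Dd (ei j) (Dd (ei l) \<Phi>) (s,x)) has_vector_derivative
        (\<Psi> (0,x) \<bullet> Dd e0 (Dd (ei j) (Dd (ei l) \<Phi>)) (0,x) + Dd e0 \<Psi> (0,x) \<bullet> Dd (ei j) (Dd (ei l) \<Phi>) (0,x))) (at 0)"
      by (rule inner_hvd[OF dt_slice[OF dS[OF sPsi x0S]] dt_slice[OF dS[OF sD(1)[OF sD(1)[OF sPhi]] x0S]]])
    then have "((\<lambda>s. \<Psi> (s,x) \<bullet> Dd (ei j) (Dd (ei l) \<Phi>) (s,x)) has_vector_derivative Hp l j) (at 0)"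
      by (simp add: Hp_def NvPsi N'_def S2Phi add.commute)
    then show ?thesis
      by (rule has_vector_derivative_transform_within_open[OF _ oI I0]) (simp add: HfI)
  qed
  define A where "A = (\<lambda>t. shape_op (F t) (Nt t) x)"
  have Ae: "A t $ k $ j = (\<Sum>l\<in>UNIV. matrix_inv (M t) $ k $ l * Hf l j t)" for t k j
    by (simp add: A_def shape_op_def metric_inv_def M_def Hf_def)
  define Ad where "Ad = (\<chi> k j. \<Sum>l\<in>UNIV. matrix_inv (M 0) $ k $ l * Hp l j + g' * X0 $ k $ l * Hf l j 0)"
  have dA: "(A has_vector_derivative Ad) (at 0)"
  proof (rule vec_hvd)
    fix k
    show "((\<lambda>t. A t $ k) has_vector_derivative Ad $ k) (at 0)"
    proof (rule vec_hvd)
      fix j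
      show "((\<lambda>t. A t $ k $ j) has_vector_derivative Ad $ k $ j) (at 0)"
        unfolding Ae Ad_def vec_lambda_beta
        by (intro has_vector_derivative_sum has_vector_derivative_mult dX dH)
    qed
  qed
  have dtA: "dt0 (\<lambda>t. shape_op (F t) (Nt t) x) = Ad"
    using vector_derivative_at[OF dA] unfolding A_def dt0_def .
  define \<rho> where "\<rho> = - (1/2) * g'"
  have rho_x: "- (1/2) * dt0 (\<lambda>t. \<gamma> t x) = \<rho>" unfolding \<rho>_def g'_def dt0gam ..
  have MX0: "matrix_inv (M 0) = X0" using M0 X0G by simp
  have Nd: "N' \<bullet> w = (\<Sum>m\<in>UNIV. (\<Sum>p\<in>UNIV. X0 $ m $ p * (w \<bullet> P p)) * (N' \<bullet> P m))" for w
  proof -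
    have "N' \<bullet> w = N' \<bullet> ((w \<bullet> Nv) *\<^sub>R Nv + (\<Sum>m\<in>UNIV. (\<Sum>p\<in>UNIV. X0 $ m $ p * (w \<bullet> P p)) *\<^sub>R P m))"
      using arg_cong[OF dec[of w], of "\<lambda>v. N' \<bullet> v"] .
    also have "\<dots> = (w \<bullet> Nv) * (N' \<bullet> Nv) + (\<Sum>m\<in>UNIV. (\<Sum>p\<in>UNIV. X0 $ m $ p * (w \<bullet> P p)) * (N' \<bullet> P m))"
      by (simp add: inner_add_right inner_sum_right)
    also have "N' \<bullet> Nv = 0" using E3 NvPsi unfolding N'_def by simp
    finally show ?thesis by simp
  qed
  have TNv: "pd m T x \<bullet> Nv = - (N' \<bullet> P m)" for m
  proof -
    have "pd m T x = Dd e0 (Dd (ei m) \<Phi>) (0,x)" using pdT[OF xU] C1[OF x0S] by simp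
    then show ?thesis using E2[of m] NvPsi PPhi[of m] unfolding N'_def by (simp add: inner_commute)
  qed
  have TTNv: "pd j (pd l T) x \<bullet> Nv = Nv \<bullet> Dd e0 (Dd (ei j) (Dd (ei l) \<Phi>)) (0,x)" for j l
    using pdpdT C2 by (simp add: inner_commute)
  have chr: "christoffel f x m j l = (\<Sum>p\<in>UNIV. X0 $ m $ p * (S2 j l \<bullet> P p))" for m j l
    unfolding christoffel_def X0_def S2_def P_def ..
  have beta_l: "beta_tensor f (Nt 0) T (\<lambda>y. - (1/2) * dt0 (\<lambda>t. \<gamma> t y)) x j l \<bullet> Nt 0 x
      = Hp l j - \<rho> * Hf l j 0" for j l
  proof -
    have "beta_tensor f (Nt 0) T (\<lambda>y. - (1/2) * dt0 (\<lambda>t. \<gamma> t y)) x j l \<bullet> Nt 0 x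
        = (pd j (pd l T) x \<bullet> Nv - (\<Sum>m\<in>UNIV. christoffel f x m j l * (pd m T x \<bullet> Nv))) * (Nv \<bullet> Nv)
          - \<rho> * ((S2 j l \<bullet> Nv) * (Nv \<bullet> Nv))"
      unfolding beta_tensor_def sff_def rho_x Nv_def[symmetric] S2_def
      by (simp add: inner_diff_left inner_sum_left)
    also have "\<dots> = pd j (pd l T) x \<bullet> Nv - (\<Sum>m\<in>UNIV. christoffel f x m j l * (pd m T x \<bullet> Nv))
          - \<rho> * (S2 j l \<bullet> Nv)" using N1 by simp
    also have "\<dots> = Nv \<bullet> Dd e0 (Dd (ei j) (Dd (ei l) \<Phi>)) (0,x)
          + (\<Sum>m\<in>UNIV. (\<Sum>p\<in>UNIV. X0 $ m $ p * (S2 j l \<bullet> P p)) * (N' \<bullet> P m)) - \<rho> * (S2 j l \<bullet> Nv)"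
      by (simp add: TTNv TNv chr sum_negf)
    also have "\<dots> = Hp l j - \<rho> * Hf l j 0"
      unfolding Hp_def H0 Nd[of "S2 j l", symmetric] by (simp add: inner_commute)
    finally show ?thesis .
  qed
  have shape_f: "shape_op f (Nt 0) x $ k $ j = (\<Sum>l\<in>UNIV. X0 $ k $ l * Hf l j 0)" for k j
  proof -
    have "pd l (F 0) x = pd l f x" for l using pdF[OF I0 xU] pdf[OF xU] by simp
    then show ?thesis unfolding shape_op_def X0_def Hf_def by simp
  qed
  have final: "B_tensor f (Nt 0) T (\<lambda>y. - (1/2) * dt0 (\<lambda>t. \<gamma> t y)) x = Ad + \<rho> *\<^sub>R shape_op f (Nt 0) x"
  proof -
    have "B_tensor f (Nt 0) T (\<lambda>y. - (1/2) * dt0 (\<lambda>t. \<gamma> t y)) x $ k $ j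
        = (Ad + \<rho> *\<^sub>R shape_op f (Nt 0) x) $ k $ j" for k j
    proof -
      have "B_tensor f (Nt 0) T (\<lambda>y. - (1/2) * dt0 (\<lambda>t. \<gamma> t y)) x $ k $ j
          = (\<Sum>l\<in>UNIV. X0 $ k $ l * (Hp l j - \<rho> * Hf l j 0))"
        unfolding B_tensor_def X0_def[symmetric] vec_lambda_beta by (simp only: beta_l)
      also have "\<dots> = (\<Sum>l\<in>UNIV. X0 $ k $ l * Hp l j + g' * X0 $ k $ l * Hf l j 0)
                     + \<rho> * (\<Sum>l\<in>UNIV. X0 $ k $ l * Hf l j 0)"
        unfolding sum_distrib_left sum.distrib[symmetric] \<rho>_def by (rule sum.cong) (auto simp: algebra_simps)
      also have "\<dots> = (Ad + \<rho> *\<^sub>R shape_op f (Nt 0) x) $ k $ j"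
        unfolding Ad_def MX0 by (simp add: shape_f)
      finally show ?thesis .
    qed
    then show ?thesis by (simp add: vec_eq_iff)
  qed
  show "B_tensor f (Nt 0) (\<lambda>y. dt0 (\<lambda>t. F t y)) (\<lambda>y. - (1/2) * dt0 (\<lambda>t. \<gamma> t y)) x
           = dt0 (\<lambda>t. shape_op (F t) (Nt t) x)
             + (- (1/2) * dt0 (\<lambda>t. \<gamma> t x)) *\<^sub>R shape_op f (Nt 0) x"
    using final unfolding dtA rho_x T_def .
qed

end
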